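(* Let $\alpha$ be a partial action datum of $M$ on $X\in\mathscr{C}$ such that the coproducts $\coprod_{m\in M}X$ and $\coprod_{(m,n)\in M\times M}\operatorname{dom}\alpha_n$ exist. Then: (i) if $r\colon\alpha\to\beta$ is a reflection of $\alpha$ in $\mathrm{Act}_M(\mathscr{C})$, with $\beta$ acting on $Y$, then $H_{X,\beta}(r)\colon\psi\to\beta$ is a coequalizer of $p,q\colon\varphi\to\psi$ in $\mathrm{Act}_M(\mathscr{C})$; (ii) if $c\colon\psi\to\beta$ is a coequalizer of $p$ and $q$ in $\mathrm{Act}_M(\mathscr{C})$, then $c\circ u_e\colon\alpha\to\beta$ is a reflection of $\alpha$ in $\mathrm{Act}_M(\mathscr{C})$. In particular, $\alpha$ has a reflection in $\mathrm{Act}_M(\mathscr{C})$ if and only if $p$ and $q$ have a coequalizer in $\mathrm{Act}_M(\mathscr{C})$.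
   Context: $M$ is a monoid with identity $e$ and $\mathscr{C}$ is a category with pullbacks. A partial action datum of $M$ on $X$ assigns to each $m\in M$ an isomorphism class of spans $[\operatorname{dom}\alpha_m,\iota_m,\alpha_m]$ with $\iota_m\colon\operatorname{dom}\alpha_m\to X$ a monomorphism and $\alpha_m\colon\operatorname{dom}\alpha_m\to X$ (isomorphism of spans: an isomorphism of apexes commuting with both legs); representatives are fixed. A global action of $M$ on $Y$ is a datum with $\beta(m)=[Y,\mathrm{id}_Y,\beta_m]$, $\beta_e=\mathrm{id}_Y$, $\beta_n\circ\beta_m=\beta_{nm}$. Given data $\alpha$ on $X$ and $\beta$ on $Y$ with representatives $[\operatorname{dom}\alpha_m,\iota_m,\alpha_m]$, $[\operatorname{dom}\beta_m,\kappa_m,\beta_m]$, a datum morphism $\alpha\to\beta$ is a morphism $f\colon X\to Y$ such that for each $m$ there is $f_m$ with $\kappa_m\circ f_m=f\circ\iota_m$, $\beta_m\circ f_m=f\circ\alpha_m$. $\mathrm{Act}_M(\mathscr{C})$ is the category of global actions with datum morphisms (for global actions these are the $g$ with $g\circ\beta_m=\gamma_m\circ g$). A reflection of $\alpha$ in $\mathrm{Act}_M(\mathscr{C})$ is a datum morphism $r\colon\alpha\to\beta$ with $\beta$ global such that for every datum morphism $f\colon\alpha\to\gamma$ with $\gamma$ global there is a unique datum morphism $f'\colon\beta\to\gamma$ with $f'\circ r=f$. Let $u_m\colon X\to\coprod_{m\in M}X$ and $u_{(m,n)}\colon\operatorname{dom}\alpha_n\to\coprod_{(m,n)}\operatorname{dom}\alpha_n$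 be the coproduct inclusions; $p,q$ are the unique morphisms with $p\circ u_{(m,n)}=u_{mn}\circ\iota_n$, $q\circ u_{(m,n)}=u_m\circ\alpha_n$. $\varphi$ is the global action on $\coprod_{(s,t)}\operatorname{dom}\alpha_t$ with $\varphi_m\circ u_{(s,t)}=u_{(ms,t)}$, and $\psi$ is the global action on $\coprod_s X$ with $\psi_m\circ u_s=u_{ms}$; $p,q$ are morphisms $\varphi\to\psi$ in $\mathrm{Act}_M(\mathscr{C})$. For a global action $\gamma$ on $Z$ and $f\colon X\to Z$, $H_{X,\gamma}(f)$ is the unique morphism $\coprod_m X\to Z$ with $H_{X,\gamma}(f)\circ u_m=\gamma_m\circ f$. *)

theory Defs
  imports Main
begin

text \<open>A category given by explicit carriers. Comp g f denotes g after f,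
  defined when Cod f = Dom g.\<close>

record ('o, 'a) cat =
  Obj :: "'o set"
  Arr :: "'a set"
  Dom :: "'a \<Rightarrow> 'o"
  Cod :: "'a \<Rightarrow> 'o"
  Id  :: "'o \<Rightarrow> 'a"
  Comp :: "'a \<Rightarrow> 'a \<Rightarrow> 'a"

definition hom :: "('o, 'a) cat \<Rightarrow> 'o \<Rightarrow> 'o \<Rightarrow> 'a set" where
  "hom C A B = {f \<in> Arr C. Dom C f = A \<and> Cod C f = B}"

definition is_category :: "('o, 'a) cat \<Rightarrow> bool" where
  "is_category C \<longleftrightarrow>
     (\<forall>f \<in> Arr C. Dom C f \<in> Obj C \<and> Cod C f \<in> Obj C) \<and>
     (\<forall>A \<in> Obj C. Id C A \<in> hom C A A) \<and>
     (\<forall>f \<in> Arr C. \<forall>g \<in> Arr C. Cod C f = Dom C g \<longrightarrow>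
         Comp C g f \<in> hom C (Dom C f) (Cod C g)) \<and>
     (\<forall>f \<in> Arr C. \<forall>g \<in> Arr C. \<forall>h \<in> Arr C.
         Cod C f = Dom C g \<longrightarrow> Cod C g = Dom C h \<longrightarrow>
         Comp C h (Comp C g f) = Comp C (Comp C h g) f) \<and>
     (\<forall>f \<in> Arr C. Comp C (Id C (Cod C f)) f = f \<and> Comp C f (Id C (Dom C f)) = f)"

definition is_mono :: "('o, 'a) cat \<Rightarrow> 'a \<Rightarrow> bool" where
  "is_mono C f \<longleftrightarrow> f \<in> Arr C \<and>
     (\<forall>g \<in> Arr C. \<forall>h \<in> Arr C. Cod C g = Dom C f \<longrightarrow> Cod C h = Dom C f \<longrightarrow>
        Dom C g = Dom C h \<longrightarrow> Comp C f g = Comp C f h \<longrightarrow> g = h)"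

definition has_pullbacks :: "('o, 'a) cat \<Rightarrow> bool" where
  "has_pullbacks C \<longleftrightarrow>
     (\<forall>f \<in> Arr C. \<forall>g \<in> Arr C. Cod C f = Cod C g \<longrightarrow>
        (\<exists>P p1 p2. P \<in> Obj C \<and> p1 \<in> hom C P (Dom C f) \<and> p2 \<in> hom C P (Dom C g) \<and>
           Comp C f p1 = Comp C g p2 \<and>
           (\<forall>Q q1 q2. Q \<in> Obj C \<and> q1 \<in> hom C Q (Dom C f) \<and> q2 \<in> hom C Q (Dom C g) \<and>
              Comp C f q1 = Comp C g q2 \<longrightarrow>
              (\<exists>!h. h \<in> hom C Q P \<and> Comp C p1 h = q1 \<and> Comp C p2 h = q2))))"

text \<open>Partial action datum of the monoid 'm (identity 1, product *) on X,
  given by fixed representatives (dom alpha_m, iota_m, alpha_m) = (D m, \<iota> m, \<alpha> m).\<close>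

definition partial_action_datum ::
  "('o, 'a) cat \<Rightarrow> 'o \<Rightarrow> ('m \<Rightarrow> 'o) \<Rightarrow> ('m \<Rightarrow> 'a) \<Rightarrow> ('m \<Rightarrow> 'a) \<Rightarrow> bool" where
  "partial_action_datum C X D \<iota> \<alpha> \<longleftrightarrow> X \<in> Obj C \<and>
     (\<forall>m. D m \<in> Obj C \<and> \<iota> m \<in> hom C (D m) X \<and> is_mono C (\<iota> m) \<and> \<alpha> m \<in> hom C (D m) X)"

definition datum_mor ::
  "('o, 'a) cat \<Rightarrow> 'o \<Rightarrow> ('m \<Rightarrow> 'o) \<Rightarrow> ('m \<Rightarrow> 'a) \<Rightarrow> ('m \<Rightarrow> 'a)
     \<Rightarrow> 'o \<Rightarrow> ('m \<Rightarrow> 'o) \<Rightarrow> ('m \<Rightarrow> 'a) \<Rightarrow> ('m \<Rightarrow> 'a) \<Rightarrow> 'a \<Rightarrow> bool" where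
  "datum_mor C X D \<iota> \<alpha> Y E \<kappa> \<beta> f \<longleftrightarrow> f \<in> hom C X Y \<and>
     (\<forall>m. \<exists>fm \<in> hom C (D m) (E m).
        Comp C (\<kappa> m) fm = Comp C f (\<iota> m) \<and> Comp C (\<beta> m) fm = Comp C f (\<alpha> m))"

definition global_action :: "('o, 'a) cat \<Rightarrow> 'o \<Rightarrow> ('m::monoid_mult \<Rightarrow> 'a) \<Rightarrow> bool" where
  "global_action C Y b \<longleftrightarrow> Y \<in> Obj C \<and> (\<forall>m. b m \<in> hom C Y Y) \<and>
     b 1 = Id C Y \<and> (\<forall>m n. Comp C (b n) (b m) = b (n * m))"

text \<open>Morphisms in Act_M(C): datum morphisms between global actions,
  a global action b on Y being the datum m \<mapsto> [Y, id_Y, b m].\<close>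

definition act_mor ::
  "('o, 'a) cat \<Rightarrow> 'o \<Rightarrow> ('m::monoid_mult \<Rightarrow> 'a) \<Rightarrow> 'o \<Rightarrow> ('m \<Rightarrow> 'a) \<Rightarrow> 'a \<Rightarrow> bool" where
  "act_mor C Y b Z g f \<longleftrightarrow> global_action C Y b \<and> global_action C Z g \<and>
     datum_mor C Y (\<lambda>_. Y) (\<lambda>_. Id C Y) b Z (\<lambda>_. Z) (\<lambda>_. Id C Z) g f"

definition is_reflection ::
  "('o, 'a) cat \<Rightarrow> 'o \<Rightarrow> ('m::monoid_mult \<Rightarrow> 'o) \<Rightarrow> ('m \<Rightarrow> 'a) \<Rightarrow> ('m \<Rightarrow> 'a)
     \<Rightarrow> 'o \<Rightarrow> ('m \<Rightarrow> 'a) \<Rightarrow> 'a \<Rightarrow> bool" where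
  "is_reflection C X D \<iota> \<alpha> Y b r \<longleftrightarrow> global_action C Y b \<and>
     datum_mor C X D \<iota> \<alpha> Y (\<lambda>_. Y) (\<lambda>_. Id C Y) b r \<and>
     (\<forall>Z g f. global_action C Z g \<and>
        datum_mor C X D \<iota> \<alpha> Z (\<lambda>_. Z) (\<lambda>_. Id C Z) g f \<longrightarrow>
        (\<exists>!f'. act_mor C Y b Z g f' \<and> Comp C f' r = f))"

definition is_act_coequalizer ::
  "('o, 'a) cat \<Rightarrow> 'o \<Rightarrow> ('m::monoid_mult \<Rightarrow> 'a) \<Rightarrow> 'o \<Rightarrow> ('m \<Rightarrow> 'a) \<Rightarrow> 'a \<Rightarrow> 'a
     \<Rightarrow> 'o \<Rightarrow> ('m \<Rightarrow> 'a) \<Rightarrow> 'a \<Rightarrow> bool" where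
  "is_act_coequalizer C A a B b p q Z z c \<longleftrightarrow>
     act_mor C A a B b p \<and> act_mor C A a B b q \<and>
     act_mor C B b Z z c \<and> Comp C c p = Comp C c q \<and>
     (\<forall>W w g. act_mor C B b W w g \<and> Comp C g p = Comp C g q \<longrightarrow>
        (\<exists>!g'. act_mor C Z z W w g' \<and> Comp C g' c = g))"

definition is_coproduct :: "('o, 'a) cat \<Rightarrow> ('i \<Rightarrow> 'o) \<Rightarrow> 'o \<Rightarrow> ('i \<Rightarrow> 'a) \<Rightarrow> bool" where
  "is_coproduct C A P u \<longleftrightarrow> P \<in> Obj C \<and> (\<forall>i. u i \<in> hom C (A i) P) \<and>
     (\<forall>Z f. Z \<in> Obj C \<and> (\<forall>i. f i \<in> hom C (A i) Z) \<longrightarrow>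
        (\<exists>!h. h \<in> hom C P Z \<and> (\<forall>i. Comp C h (u i) = f i)))"

definition copair :: "('o, 'a) cat \<Rightarrow> 'o \<Rightarrow> ('i \<Rightarrow> 'a) \<Rightarrow> 'o \<Rightarrow> ('i \<Rightarrow> 'a) \<Rightarrow> 'a" where
  "copair C P u Z f = (THE h. h \<in> hom C P Z \<and> (\<forall>i. Comp C h (u i) = f i))"

definition pmap :: "('o, 'a) cat \<Rightarrow> ('m::monoid_mult \<Rightarrow> 'a) \<Rightarrow> 'o \<Rightarrow> ('m \<Rightarrow> 'a)
     \<Rightarrow> 'o \<Rightarrow> ('m \<times> 'm \<Rightarrow> 'a) \<Rightarrow> 'a" where
  "pmap C \<iota> P1 u1 P2 u2 = copair C P2 u2 P1 (\<lambda>(m, n). Comp C (u1 (m * n)) (\<iota> n))"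

definition qmap :: "('o, 'a) cat \<Rightarrow> ('m \<Rightarrow> 'a) \<Rightarrow> 'o \<Rightarrow> ('m \<Rightarrow> 'a)
     \<Rightarrow> 'o \<Rightarrow> ('m \<times> 'm \<Rightarrow> 'a) \<Rightarrow> 'a" where
  "qmap C \<alpha> P1 u1 P2 u2 = copair C P2 u2 P1 (\<lambda>(m, n). Comp C (u1 m) (\<alpha> n))"

definition phi_act :: "('o, 'a) cat \<Rightarrow> 'o \<Rightarrow> ('m::monoid_mult \<times> 'm \<Rightarrow> 'a) \<Rightarrow> 'm \<Rightarrow> 'a" where
  "phi_act C P2 u2 m = copair C P2 u2 P2 (\<lambda>(s, t). u2 (m * s, t))"

definition psi_act :: "('o, 'a) cat \<Rightarrow> 'o \<Rightarrow> ('m::monoid_mult \<Rightarrow> 'a) \<Rightarrow> 'm \<Rightarrow> 'a" where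
  "psi_act C P1 u1 m = copair C P1 u1 P1 (\<lambda>s. u1 (m * s))"

definition H_map :: "('o, 'a) cat \<Rightarrow> 'o \<Rightarrow> ('m \<Rightarrow> 'a) \<Rightarrow> 'o \<Rightarrow> ('m \<Rightarrow> 'a) \<Rightarrow> 'a \<Rightarrow> 'a" where
  "H_map C P1 u1 Z g f = copair C P1 u1 Z (\<lambda>m. Comp C (g m) f)"

end

theory Submission
  imports Defs
begin

locale thm15 =
  fixes C :: "('o, 'a) cat"
    and X :: 'o and D :: "'m::monoid_mult \<Rightarrow> 'o" and \<iota> \<alpha> :: "'m \<Rightarrow> 'a"
    and P1 :: 'o and u1 :: "'m \<Rightarrow> 'a" and P2 :: 'o and u2 :: "'m \<times> 'm \<Rightarrow> 'a"
  assumes cat: "is_category C"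
    and dat: "partial_action_datum C X D \<iota> \<alpha>"
    and cop1: "is_coproduct C (\<lambda>_. X) P1 u1"
    and cop2: "is_coproduct C (\<lambda>(m, n). D n) P2 u2"
begin

abbreviation cmp (infixr "\<cdot>" 55) where "g \<cdot> f \<equiv> Comp C g f"

lemma comp_in: "f \<in> hom C A B \<Longrightarrow> g \<in> hom C B E \<Longrightarrow> g \<cdot> f \<in> hom C A E"
  using cat unfolding is_category_def hom_def by auto

lemma assoc: "f \<in> hom C A B \<Longrightarrow> g \<in> hom C B E \<Longrightarrow> h \<in> hom C E F \<Longrightarrow> h \<cdot> (g \<cdot> f) = (h \<cdot> g) \<cdot> f"
  using cat unfolding is_category_def hom_def by auto

lemma id_in: "A \<in> Obj C \<Longrightarrow> Id C A \<in> hom C A A"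
  using cat unfolding is_category_def by auto

lemma id_l: "f \<in> hom C A B \<Longrightarrow> Id C B \<cdot> f = f"
  using cat unfolding is_category_def hom_def by auto

lemma id_r: "f \<in> hom C A B \<Longrightarrow> f \<cdot> Id C A = f"
  using cat unfolding is_category_def hom_def by auto

lemma hom_obj: "f \<in> hom C A B \<Longrightarrow> A \<in> Obj C \<and> B \<in> Obj C"
  using cat unfolding is_category_def hom_def by auto

lemma X_obj: "X \<in> Obj C" and D_obj: "D n \<in> Obj C" and iota_hom: "\<iota> n \<in> hom C (D n) X"
  and alpha_hom: "\<alpha> n \<in> hom C (D n) X"
  using dat unfolding partial_action_datum_def by auto

lemma P1_obj: "P1 \<in> Obj C" and u1_hom: "u1 s \<in> hom C X P1"
  using cop1 unfolding is_coproduct_def by auto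

lemma P2_obj: "P2 \<in> Obj C"
  using cop2 unfolding is_coproduct_def by auto

lemma u2_hom: "u2 (m, n) \<in> hom C (D n) P2"
proof -
  have "\<forall>i. u2 i \<in> hom C ((\<lambda>(m, n). D n) i) P2" using cop2 unfolding is_coproduct_def by blast
  from this[rule_format, of "(m, n)"] show ?thesis by simp
qed

lemma copair1:
  assumes "Z \<in> Obj C" "\<And>s. f s \<in> hom C X Z"
  shows "copair C P1 u1 Z f \<in> hom C P1 Z" "copair C P1 u1 Z f \<cdot> u1 s = f s"
proof -
  have "\<exists>!h. h \<in> hom C P1 Z \<and> (\<forall>i. h \<cdot> u1 i = f i)"
    using cop1 assms unfolding is_coproduct_def by auto
  from theI'[OF this] show "copair C P1 u1 Z f \<in> hom C P1 Z" "copair C P1 u1 Z f \<cdot> u1 s = f s"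
    unfolding copair_def by auto
qed

lemma ext1:
  assumes "h \<in> hom C P1 Z" "h' \<in> hom C P1 Z" "\<And>s. h \<cdot> u1 s = h' \<cdot> u1 s"
  shows "h = h'"
proof -
  have Z: "Z \<in> Obj C" using hom_obj assms(1) by blast
  have "\<exists>!h. h \<in> hom C P1 Z \<and> (\<forall>i. h \<cdot> u1 i = h' \<cdot> u1 i)"
    using cop1 Z comp_in[OF u1_hom assms(2)] unfolding is_coproduct_def by auto
  thus ?thesis using assms by blast
qed

lemma cop2_univ:
  assumes "Z \<in> Obj C" "\<And>m n. f (m, n) \<in> hom C (D n) Z"
  shows "\<exists>!h. h \<in> hom C P2 Z \<and> (\<forall>i. h \<cdot> u2 i = f i)"
proof -
  have U: "\<And>Z f. Z \<in> Obj C \<and> (\<forall>i. f i \<in> hom C ((\<lambda>(m, n). D n) i) Z) \<Longrightarrow>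
        (\<exists>!h. h \<in> hom C P2 Z \<and> (\<forall>i. h \<cdot> u2 i = f i))"
    using cop2 unfolding is_coproduct_def by blast
  have "\<forall>i. f i \<in> hom C ((\<lambda>(m, n). D n) i) Z"
  proof
    fix i show "f i \<in> hom C ((\<lambda>(m, n). D n) i) Z" using assms(2) by (cases i) simp
  qed
  thus ?thesis using U assms(1) by blast
qed

lemma copair2:
  assumes "Z \<in> Obj C" "\<And>m n. f (m, n) \<in> hom C (D n) Z"
  shows "copair C P2 u2 Z f \<in> hom C P2 Z" "copair C P2 u2 Z f \<cdot> u2 (m, n) = f (m, n)"
proof -
  from theI'[OF cop2_univ[OF assms]] show "copair C P2 u2 Z f \<in> hom C P2 Z" "copair C P2 u2 Z f \<cdot> u2 (m, n) = f (m, n)"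
    unfolding copair_def by auto
qed

lemma ext2:
  assumes "h \<in> hom C P2 Z" "h' \<in> hom C P2 Z" "\<And>m n. h \<cdot> u2 (m, n) = h' \<cdot> u2 (m, n)"
  shows "h = h'"
proof -
  have Z: "Z \<in> Obj C" using hom_obj assms(1) by blast
  have E: "\<exists>!g. g \<in> hom C P2 Z \<and> (\<forall>i. g \<cdot> u2 i = h' \<cdot> u2 i)"
    by (rule cop2_univ[OF Z]) (rule comp_in[OF u2_hom assms(2)])
  have "\<forall>i. h \<cdot> u2 i = h' \<cdot> u2 i"
  proof
    fix i show "h \<cdot> u2 i = h' \<cdot> u2 i" using assms(3) by (cases i) simp
  qed
  thus ?thesis using E assms(1,2) by blast
qed

lemma datum_iff:
  assumes "global_action C Z g"
  shows "datum_mor C X D \<iota> \<alpha> Z (\<lambda>_. Z) (\<lambda>_. Id C Z) g f \<longleftrightarrow>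
         f \<in> hom C X Z \<and> (\<forall>m. g m \<cdot> (f \<cdot> \<iota> m) = f \<cdot> \<alpha> m)"
proof
  assume d: "datum_mor C X D \<iota> \<alpha> Z (\<lambda>_. Z) (\<lambda>_. Id C Z) g f"
  hence f: "f \<in> hom C X Z" unfolding datum_mor_def by auto
  show "f \<in> hom C X Z \<and> (\<forall>m. g m \<cdot> (f \<cdot> \<iota> m) = f \<cdot> \<alpha> m)"
  proof (intro conjI allI f)
    fix m
    from d obtain fm where fm: "fm \<in> hom C (D m) Z" "Id C Z \<cdot> fm = f \<cdot> \<iota> m" "g m \<cdot> fm = f \<cdot> \<alpha> m"
      unfolding datum_mor_def by blast
    have "fm = f \<cdot> \<iota> m" using fm id_l by metis
    thus "g m \<cdot> (f \<cdot> \<iota> m) = f \<cdot> \<alpha> m" using fm by simp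
  qed
next
  assume a: "f \<in> hom C X Z \<and> (\<forall>m. g m \<cdot> (f \<cdot> \<iota> m) = f \<cdot> \<alpha> m)"
  show "datum_mor C X D \<iota> \<alpha> Z (\<lambda>_. Z) (\<lambda>_. Id C Z) g f"
    unfolding datum_mor_def
  proof (intro conjI allI)
    show "f \<in> hom C X Z" using a by simp
    fix m
    have h: "f \<cdot> \<iota> m \<in> hom C (D m) Z" using comp_in iota_hom a by blast
    show "\<exists>fm\<in>hom C (D m) Z. Id C Z \<cdot> fm = f \<cdot> \<iota> m \<and> g m \<cdot> fm = f \<cdot> \<alpha> m"
      using h id_l[OF h] a by blast
  qed
qed

lemma act_iff:
  "act_mor C Y b Z g f \<longleftrightarrow> global_action C Y b \<and> global_action C Z g \<and>
     f \<in> hom C Y Z \<and> (\<forall>m. g m \<cdot> f = f \<cdot> b m)"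
proof
  assume d: "act_mor C Y b Z g f"
  hence f: "f \<in> hom C Y Z" and gY: "global_action C Y b" and gZ: "global_action C Z g"
    unfolding act_mor_def datum_mor_def by auto
  have "\<forall>m. g m \<cdot> f = f \<cdot> b m"
  proof
    fix m
    from d obtain fm where fm: "fm \<in> hom C Y Z" "Id C Z \<cdot> fm = f \<cdot> Id C Y" "g m \<cdot> fm = f \<cdot> b m"
      unfolding act_mor_def datum_mor_def by blast
    have "fm = f" using fm id_l id_r f by metis
    thus "g m \<cdot> f = f \<cdot> b m" using fm by simp
  qed
  thus "global_action C Y b \<and> global_action C Z g \<and> f \<in> hom C Y Z \<and> (\<forall>m. g m \<cdot> f = f \<cdot> b m)"
    using f gY gZ by auto
next
  assume a: "global_action C Y b \<and> global_action C Z g \<and> f \<in> hom C Y Z \<and> (\<forall>m. g m \<cdot> f = f \<cdot> b m)"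
  hence f: "f \<in> hom C Y Z" by auto
  show "act_mor C Y b Z g f"
    unfolding act_mor_def datum_mor_def using a id_l[OF f] id_r[OF f] by auto
qed

lemma act_comp:
  assumes "act_mor C Y b Z g f" "act_mor C Z g W w f'"
  shows "act_mor C Y b W w (f' \<cdot> f)"
proof -
  have f: "f \<in> hom C Y Z" and f': "f' \<in> hom C Z W" and gs: "global_action C Y b" "global_action C W w"
    and c1: "\<And>m. g m \<cdot> f = f \<cdot> b m" and c2: "\<And>m. w m \<cdot> f' = f' \<cdot> g m"
    using assms unfolding act_iff by auto
  have bh: "\<And>m. b m \<in> hom C Y Y" and gh: "\<And>m. g m \<in> hom C Z Z" and wh: "\<And>m. w m \<in> hom C W W"
    using assms unfolding act_mor_def global_action_def by auto
  have "w m \<cdot> (f' \<cdot> f) = (f' \<cdot> f) \<cdot> b m" for m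
  proof -
    have "w m \<cdot> (f' \<cdot> f) = (w m \<cdot> f') \<cdot> f" using assoc[OF f f' wh] .
    also have "\<dots> = (f' \<cdot> g m) \<cdot> f" using c2 by simp
    also have "\<dots> = f' \<cdot> (g m \<cdot> f)" using assoc[OF f gh f'] by simp
    also have "\<dots> = f' \<cdot> (f \<cdot> b m)" using c1 by simp
    also have "\<dots> = (f' \<cdot> f) \<cdot> b m" using assoc[OF bh f f'] .
    finally show ?thesis .
  qed
  thus ?thesis unfolding act_iff using gs comp_in[OF f f'] by auto
qed

abbreviation "\<psi> \<equiv> psi_act C P1 u1"
abbreviation "\<phi> \<equiv> phi_act C P2 u2"
abbreviation "pp \<equiv> pmap C \<iota> P1 u1 P2 u2"
abbreviation "qq \<equiv> qmap C \<alpha> P1 u1 P2 u2"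

lemma psi_hom: "\<psi> m \<in> hom C P1 P1" and psi_u: "\<psi> m \<cdot> u1 s = u1 (m * s)"
  unfolding psi_act_def using copair1[OF P1_obj u1_hom] by auto

lemma phi_hom: "\<phi> m \<in> hom C P2 P2" and phi_u: "\<phi> m \<cdot> u2 (s, t) = u2 (m * s, t)"
proof -
  have "\<And>a b. (\<lambda>(s, t). u2 (m * s, t)) (a, b) \<in> hom C (D b) P2" using u2_hom by simp
  from copair2[OF P2_obj this] show "\<phi> m \<in> hom C P2 P2" "\<phi> m \<cdot> u2 (s, t) = u2 (m * s, t)"
    unfolding phi_act_def by auto
qed

lemma p_hom: "pp \<in> hom C P2 P1" and p_u: "pp \<cdot> u2 (m, n) = u1 (m * n) \<cdot> \<iota> n"
proof -
  have "\<And>a b. (\<lambda>(m, n). u1 (m * n) \<cdot> \<iota> n) (a, b) \<in> hom C (D b) P1"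
    using comp_in[OF iota_hom u1_hom] by simp
  from copair2[OF P1_obj this] show "pp \<in> hom C P2 P1" "pp \<cdot> u2 (m, n) = u1 (m * n) \<cdot> \<iota> n"
    unfolding pmap_def by auto
qed

lemma q_hom: "qq \<in> hom C P2 P1" and q_u: "qq \<cdot> u2 (m, n) = u1 m \<cdot> \<alpha> n"
proof -
  have "\<And>a b. (\<lambda>(m, n). u1 m \<cdot> \<alpha> n) (a, b) \<in> hom C (D b) P1"
    using comp_in[OF alpha_hom u1_hom] by simp
  from copair2[OF P1_obj this] show "qq \<in> hom C P2 P1" "qq \<cdot> u2 (m, n) = u1 m \<cdot> \<alpha> n"
    unfolding qmap_def by auto
qed

lemma psi_global: "global_action C P1 \<psi>"
  unfolding global_action_def
proof (intro conjI allI P1_obj psi_hom)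
  show "\<psi> 1 = Id C P1"
    by (rule ext1[OF psi_hom id_in[OF P1_obj]]) (simp add: psi_u id_l[OF u1_hom])
  fix m n
  show "\<psi> n \<cdot> \<psi> m = \<psi> (n * m)"
  proof (rule ext1[OF comp_in[OF psi_hom psi_hom] psi_hom])
    fix s
    have "(\<psi> n \<cdot> \<psi> m) \<cdot> u1 s = \<psi> n \<cdot> (\<psi> m \<cdot> u1 s)" using assoc[OF u1_hom psi_hom psi_hom] by simp
    thus "(\<psi> n \<cdot> \<psi> m) \<cdot> u1 s = \<psi> (n * m) \<cdot> u1 s" by (simp add: psi_u mult.assoc)
  qed
qed

lemma phi_global: "global_action C P2 \<phi>"
  unfolding global_action_def
proof (intro conjI allI P2_obj phi_hom)
  show "\<phi> 1 = Id C P2"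
    by (rule ext2[OF phi_hom id_in[OF P2_obj]]) (simp add: phi_u id_l[OF u2_hom])
  fix m n
  show "\<phi> n \<cdot> \<phi> m = \<phi> (n * m)"
  proof (rule ext2[OF comp_in[OF phi_hom phi_hom] phi_hom])
    fix s t
    have "(\<phi> n \<cdot> \<phi> m) \<cdot> u2 (s, t) = \<phi> n \<cdot> (\<phi> m \<cdot> u2 (s, t))" using assoc[OF u2_hom phi_hom phi_hom] by simp
    thus "(\<phi> n \<cdot> \<phi> m) \<cdot> u2 (s, t) = \<phi> (n * m) \<cdot> u2 (s, t)" by (simp add: phi_u mult.assoc)
  qed
qed

lemma p_act: "act_mor C P2 \<phi> P1 \<psi> pp"
  unfolding act_iff
proof (intro conjI allI phi_global psi_global p_hom)
  fix m
  show "\<psi> m \<cdot> pp = pp \<cdot> \<phi> m"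
  proof (rule ext2[OF comp_in[OF p_hom psi_hom] comp_in[OF phi_hom p_hom]])
    fix s t
    have "(\<psi> m \<cdot> pp) \<cdot> u2 (s, t) = \<psi> m \<cdot> (u1 (s * t) \<cdot> \<iota> t)"
      using assoc[OF u2_hom p_hom psi_hom] p_u by simp
    also have "\<dots> = u1 (m * (s * t)) \<cdot> \<iota> t" using assoc[OF iota_hom u1_hom psi_hom] psi_u by simp
    also have "\<dots> = pp \<cdot> (\<phi> m \<cdot> u2 (s, t))" using phi_u p_u by (simp add: mult.assoc)
    also have "\<dots> = (pp \<cdot> \<phi> m) \<cdot> u2 (s, t)" using assoc[OF u2_hom phi_hom p_hom] .
    finally show "(\<psi> m \<cdot> pp) \<cdot> u2 (s, t) = (pp \<cdot> \<phi> m) \<cdot> u2 (s, t)" .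
  qed
qed

lemma q_act: "act_mor C P2 \<phi> P1 \<psi> qq"
  unfolding act_iff
proof (intro conjI allI phi_global psi_global q_hom)
  fix m
  show "\<psi> m \<cdot> qq = qq \<cdot> \<phi> m"
  proof (rule ext2[OF comp_in[OF q_hom psi_hom] comp_in[OF phi_hom q_hom]])
    fix s t
    have "(\<psi> m \<cdot> qq) \<cdot> u2 (s, t) = \<psi> m \<cdot> (u1 s \<cdot> \<alpha> t)"
      using assoc[OF u2_hom q_hom psi_hom] q_u by simp
    also have "\<dots> = u1 (m * s) \<cdot> \<alpha> t" using assoc[OF alpha_hom u1_hom psi_hom] psi_u by simp
    also have "\<dots> = qq \<cdot> (\<phi> m \<cdot> u2 (s, t))" using phi_u q_u by simp
    also have "\<dots> = (qq \<cdot> \<phi> m) \<cdot> u2 (s, t)" using assoc[OF u2_hom phi_hom q_hom] .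
    finally show "(\<psi> m \<cdot> qq) \<cdot> u2 (s, t) = (qq \<cdot> \<phi> m) \<cdot> u2 (s, t)" .
  qed
qed


lemma act_psi_u:
  assumes "act_mor C P1 \<psi> Z g h"
  shows "h \<cdot> u1 s = g s \<cdot> (h \<cdot> u1 1)"
proof -
  have h: "h \<in> hom C P1 Z" and c: "\<And>m. g m \<cdot> h = h \<cdot> \<psi> m" and gh: "\<And>m. g m \<in> hom C Z Z"
    using assms unfolding act_iff global_action_def by auto
  have "h \<cdot> u1 s = h \<cdot> (\<psi> s \<cdot> u1 1)" using psi_u by simp
  also have "\<dots> = (h \<cdot> \<psi> s) \<cdot> u1 1" using assoc[OF u1_hom psi_hom h] .
  also have "\<dots> = (g s \<cdot> h) \<cdot> u1 1" using c by simp
  also have "\<dots> = g s \<cdot> (h \<cdot> u1 1)" using assoc[OF u1_hom h gh] by simp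
  finally show ?thesis .
qed

lemma act_coeq_datum:
  assumes "act_mor C P1 \<psi> Z g h" "h \<cdot> pp = h \<cdot> qq"
  shows "datum_mor C X D \<iota> \<alpha> Z (\<lambda>_. Z) (\<lambda>_. Id C Z) g (h \<cdot> u1 1)"
proof -
  have h: "h \<in> hom C P1 Z" and gZ: "global_action C Z g" and gh: "\<And>m. g m \<in> hom C Z Z"
    using assms unfolding act_iff global_action_def by auto
  have hu: "h \<cdot> u1 1 \<in> hom C X Z" using comp_in[OF u1_hom h] .
  have "g m \<cdot> ((h \<cdot> u1 1) \<cdot> \<iota> m) = (h \<cdot> u1 1) \<cdot> \<alpha> m" for m
  proof -
    have "g m \<cdot> ((h \<cdot> u1 1) \<cdot> \<iota> m) = (g m \<cdot> (h \<cdot> u1 1)) \<cdot> \<iota> m" using assoc[OF iota_hom hu gh] .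
    also have "\<dots> = (h \<cdot> u1 (1 * m)) \<cdot> \<iota> m" using act_psi_u[OF assms(1), of m] by simp
    also have "\<dots> = h \<cdot> (pp \<cdot> u2 (1, m))" using assoc[OF iota_hom u1_hom h] p_u by simp
    also have "\<dots> = (h \<cdot> pp) \<cdot> u2 (1, m)" using assoc[OF u2_hom p_hom h] .
    also have "\<dots> = (h \<cdot> qq) \<cdot> u2 (1, m)" using assms(2) by simp
    also have "\<dots> = h \<cdot> (u1 1 \<cdot> \<alpha> m)" using assoc[OF u2_hom q_hom h] q_u by simp
    also have "\<dots> = (h \<cdot> u1 1) \<cdot> \<alpha> m" using assoc[OF alpha_hom u1_hom h] .
    finally show ?thesis .
  qed
  thus ?thesis using datum_iff[OF gZ] hu by auto
qed

abbreviation "HH Z g f \<equiv> H_map C P1 u1 Z g f"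

lemma H_props:
  assumes gZ: "global_action C Z g" and f: "datum_mor C X D \<iota> \<alpha> Z (\<lambda>_. Z) (\<lambda>_. Id C Z) g f"
  shows "HH Z g f \<in> hom C P1 Z" "HH Z g f \<cdot> u1 s = g s \<cdot> f" "act_mor C P1 \<psi> Z g (HH Z g f)"
    "HH Z g f \<cdot> pp = HH Z g f \<cdot> qq"
proof -
  have fh: "f \<in> hom C X Z" and fc: "\<And>m. g m \<cdot> (f \<cdot> \<iota> m) = f \<cdot> \<alpha> m" using f datum_iff[OF gZ] by auto
  have Z: "Z \<in> Obj C" and gh: "\<And>m. g m \<in> hom C Z Z" and gm: "\<And>m n. g n \<cdot> g m = g (n * m)"
    using gZ unfolding global_action_def by auto
  have gf: "\<And>s. g s \<cdot> f \<in> hom C X Z" using comp_in[OF fh gh] .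
  note cp = copair1[OF Z gf, folded H_map_def]
  have H: "HH Z g f \<in> hom C P1 Z" and Hu: "\<And>s. HH Z g f \<cdot> u1 s = g s \<cdot> f" using cp by auto
  show "HH Z g f \<in> hom C P1 Z" by (rule H)
  show "HH Z g f \<cdot> u1 s = g s \<cdot> f" by (rule Hu)
  have "g m \<cdot> HH Z g f = HH Z g f \<cdot> \<psi> m" for m
  proof (rule ext1[OF comp_in[OF H gh] comp_in[OF psi_hom H]])
    fix s
    have "(g m \<cdot> HH Z g f) \<cdot> u1 s = g m \<cdot> (g s \<cdot> f)" using assoc[OF u1_hom H gh] Hu by simp
    also have "\<dots> = g (m * s) \<cdot> f" using assoc[OF fh gh gh] gm by simp
    also have "\<dots> = (HH Z g f \<cdot> \<psi> m) \<cdot> u1 s" using assoc[OF u1_hom psi_hom H] psi_u Hu by simp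
    finally show "(g m \<cdot> HH Z g f) \<cdot> u1 s = (HH Z g f \<cdot> \<psi> m) \<cdot> u1 s" .
  qed
  thus "act_mor C P1 \<psi> Z g (HH Z g f)" unfolding act_iff using psi_global gZ H by auto
  show "HH Z g f \<cdot> pp = HH Z g f \<cdot> qq"
  proof (rule ext2[OF comp_in[OF p_hom H] comp_in[OF q_hom H]])
    fix m n
    have "(HH Z g f \<cdot> pp) \<cdot> u2 (m, n) = HH Z g f \<cdot> (u1 (m * n) \<cdot> \<iota> n)"
      using assoc[OF u2_hom p_hom H] p_u by simp
    also have "\<dots> = (g (m * n) \<cdot> f) \<cdot> \<iota> n" using assoc[OF iota_hom u1_hom H] Hu by simp
    also have "\<dots> = ((g m \<cdot> g n) \<cdot> f) \<cdot> \<iota> n" using gm by simp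
    also have "\<dots> = g m \<cdot> (g n \<cdot> (f \<cdot> \<iota> n))"
      by (metis assoc[OF fh gh gh] assoc[OF iota_hom fh gh] assoc[OF iota_hom gf gh] gf)
    also have "\<dots> = g m \<cdot> (f \<cdot> \<alpha> n)" using fc by simp
    also have "\<dots> = (g m \<cdot> f) \<cdot> \<alpha> n" using assoc[OF alpha_hom fh gh] .
    also have "\<dots> = (HH Z g f \<cdot> qq) \<cdot> u2 (m, n)"
      using assoc[OF u2_hom q_hom H] q_u assoc[OF alpha_hom u1_hom H] Hu by simp
    finally show "(HH Z g f \<cdot> pp) \<cdot> u2 (m, n) = (HH Z g f \<cdot> qq) \<cdot> u2 (m, n)" .
  qed
qed

lemma act_psi_eq_H:
  assumes "act_mor C P1 \<psi> Z g h" "datum_mor C X D \<iota> \<alpha> Z (\<lambda>_. Z) (\<lambda>_. Id C Z) g f"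
    "h \<cdot> u1 1 = f"
  shows "h = HH Z g f"
proof -
  have h: "h \<in> hom C P1 Z" and gZ: "global_action C Z g" using assms unfolding act_iff by auto
  show ?thesis
  proof (rule ext1[OF h H_props(1)[OF gZ assms(2)]])
    fix s
    show "h \<cdot> u1 s = HH Z g f \<cdot> u1 s"
      using H_props(2)[OF gZ assms(2), of s] act_psi_u[OF assms(1), of s] assms(3) by simp
  qed
qed


lemma H_u1:
  assumes gZ: "global_action C Z g" and f: "datum_mor C X D \<iota> \<alpha> Z (\<lambda>_. Z) (\<lambda>_. Id C Z) g f"
  shows "HH Z g f \<cdot> u1 1 = f"
proof -
  have fh: "f \<in> hom C X Z" using f datum_iff[OF gZ] by auto
  have "g 1 = Id C Z" using gZ unfolding global_action_def by auto
  thus ?thesis using H_props(2)[OF gZ f, of 1] id_l[OF fh] by simp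
qed

lemma part1:
  assumes R: "is_reflection C X D \<iota> \<alpha> Y \<beta> r"
  shows "is_act_coequalizer C P2 \<phi> P1 \<psi> pp qq Y \<beta> (HH Y \<beta> r)"
proof -
  have gY: "global_action C Y \<beta>" and rd: "datum_mor C X D \<iota> \<alpha> Y (\<lambda>_. Y) (\<lambda>_. Id C Y) \<beta> r"
    and univ: "\<And>Z g f. global_action C Z g \<Longrightarrow> datum_mor C X D \<iota> \<alpha> Z (\<lambda>_. Z) (\<lambda>_. Id C Z) g f \<Longrightarrow>
        (\<exists>!f'. act_mor C Y \<beta> Z g f' \<and> f' \<cdot> r = f)"
    using R unfolding is_reflection_def by auto
  note Hp = H_props[OF gY rd]
  have Hh: "HH Y \<beta> r \<in> hom C P1 Y" by (rule Hp(1))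
  have Hu1: "HH Y \<beta> r \<cdot> u1 1 = r" by (rule H_u1[OF gY rd])
  show ?thesis unfolding is_act_coequalizer_def
  proof (intro conjI allI impI p_act q_act Hp(3) Hp(4))
    fix W w g
    assume a: "act_mor C P1 \<psi> W w g \<and> g \<cdot> pp = g \<cdot> qq"
    hence ga: "act_mor C P1 \<psi> W w g" and gpq: "g \<cdot> pp = g \<cdot> qq" by auto
    have gW: "global_action C W w" and gh: "g \<in> hom C P1 W" using ga unfolding act_iff by auto
    have fd: "datum_mor C X D \<iota> \<alpha> W (\<lambda>_. W) (\<lambda>_. Id C W) w (g \<cdot> u1 1)"
      by (rule act_coeq_datum[OF ga gpq])
    obtain f' where f': "act_mor C Y \<beta> W w f'" "f' \<cdot> r = g \<cdot> u1 1"
      and funiq: "\<And>y. act_mor C Y \<beta> W w y \<and> y \<cdot> r = g \<cdot> u1 1 \<Longrightarrow> y = f'"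
      using univ[OF gW fd] by metis
    have f'h: "f' \<in> hom C Y W" using f'(1) unfolding act_iff by auto
    have comp_act: "act_mor C P1 \<psi> W w (f' \<cdot> HH Y \<beta> r)" by (rule act_comp[OF Hp(3) f'(1)])
    have "(f' \<cdot> HH Y \<beta> r) \<cdot> u1 1 = g \<cdot> u1 1"
      using assoc[OF u1_hom Hh f'h, of 1] Hu1 f'(2) by metis
    hence e1: "f' \<cdot> HH Y \<beta> r = HH W w (g \<cdot> u1 1)" by (rule act_psi_eq_H[OF comp_act fd])
    have e2: "g = HH W w (g \<cdot> u1 1)" by (rule act_psi_eq_H[OF ga fd refl])
    show "\<exists>!g'. act_mor C Y \<beta> W w g' \<and> g' \<cdot> HH Y \<beta> r = g"
    proof (rule ex1I[of _ f'])
      show "act_mor C Y \<beta> W w f' \<and> f' \<cdot> HH Y \<beta> r = g" using f'(1) e1 e2 by simp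
    next
      fix y assume y: "act_mor C Y \<beta> W w y \<and> y \<cdot> HH Y \<beta> r = g"
      have yh: "y \<in> hom C Y W" using y unfolding act_iff by auto
      have "y \<cdot> r = g \<cdot> u1 1" using assoc[OF u1_hom Hh yh, of 1] Hu1 y by metis
      thus "y = f'" using funiq y by blast
    qed
  qed
qed

lemma part2:
  assumes Q: "is_act_coequalizer C P2 \<phi> P1 \<psi> pp qq Y \<beta> c"
  shows "is_reflection C X D \<iota> \<alpha> Y \<beta> (c \<cdot> u1 1)"
proof -
  have ca: "act_mor C P1 \<psi> Y \<beta> c" and cpq: "c \<cdot> pp = c \<cdot> qq"
    and univ: "\<And>W w g. act_mor C P1 \<psi> W w g \<Longrightarrow> g \<cdot> pp = g \<cdot> qq \<Longrightarrow>
        (\<exists>!g'. act_mor C Y \<beta> W w g' \<and> g' \<cdot> c = g)"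
    using Q unfolding is_act_coequalizer_def by auto
  have gY: "global_action C Y \<beta>" and ch: "c \<in> hom C P1 Y" using ca unfolding act_iff by auto
  have rd: "datum_mor C X D \<iota> \<alpha> Y (\<lambda>_. Y) (\<lambda>_. Id C Y) \<beta> (c \<cdot> u1 1)"
    by (rule act_coeq_datum[OF ca cpq])
  show ?thesis unfolding is_reflection_def
  proof (intro conjI allI impI gY rd)
    fix Z g f
    assume a: "global_action C Z g \<and> datum_mor C X D \<iota> \<alpha> Z (\<lambda>_. Z) (\<lambda>_. Id C Z) g f"
    hence gZ: "global_action C Z g" and fd: "datum_mor C X D \<iota> \<alpha> Z (\<lambda>_. Z) (\<lambda>_. Id C Z) g f" by auto
    note Hp = H_props[OF gZ fd]
    obtain g' where g': "act_mor C Y \<beta> Z g g'" "g' \<cdot> c = HH Z g f"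
      and guniq: "\<And>y. act_mor C Y \<beta> Z g y \<and> y \<cdot> c = HH Z g f \<Longrightarrow> y = g'"
      using univ[OF Hp(3) Hp(4)] by metis
    have g'h: "g' \<in> hom C Y Z" using g'(1) unfolding act_iff by auto
    show "\<exists>!f'. act_mor C Y \<beta> Z g f' \<and> f' \<cdot> (c \<cdot> u1 1) = f"
    proof (rule ex1I[of _ g'])
      have "g' \<cdot> (c \<cdot> u1 1) = (g' \<cdot> c) \<cdot> u1 1" by (rule assoc[OF u1_hom ch g'h])
      thus "act_mor C Y \<beta> Z g g' \<and> g' \<cdot> (c \<cdot> u1 1) = f" using g' H_u1[OF gZ fd] by simp
    next
      fix y assume y: "act_mor C Y \<beta> Z g y \<and> y \<cdot> (c \<cdot> u1 1) = f"
      have yh: "y \<in> hom C Y Z" using y unfolding act_iff by auto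
      have ya: "act_mor C P1 \<psi> Z g (y \<cdot> c)" using act_comp[OF ca] y by blast
      have "(y \<cdot> c) \<cdot> u1 1 = f" using assoc[OF u1_hom ch yh, of 1] y by metis
      hence "y \<cdot> c = HH Z g f" by (rule act_psi_eq_H[OF ya fd])
      thus "y = g'" using guniq y by blast
    qed
  qed
qed

end

theorem mainTheorem15:
  fixes C :: "('o, 'a) cat"
    and X :: 'o and D :: "'m::monoid_mult \<Rightarrow> 'o" and \<iota> \<alpha> :: "'m \<Rightarrow> 'a"
    and P1 :: 'o and u1 :: "'m \<Rightarrow> 'a" and P2 :: 'o and u2 :: "'m \<times> 'm \<Rightarrow> 'a"
  assumes cat: "is_category C"
    and pb: "has_pullbacks C"
    and dat: "partial_action_datum C X D \<iota> \<alpha>"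
    and cop1: "is_coproduct C (\<lambda>_. X) P1 u1"
    and cop2: "is_coproduct C (\<lambda>(m, n). D n) P2 u2"
  shows "(\<forall>Y \<beta> r. is_reflection C X D \<iota> \<alpha> Y \<beta> r \<longrightarrow>
            is_act_coequalizer C P2 (phi_act C P2 u2) P1 (psi_act C P1 u1)
              (pmap C \<iota> P1 u1 P2 u2) (qmap C \<alpha> P1 u1 P2 u2) Y \<beta> (H_map C P1 u1 Y \<beta> r))
       \<and> (\<forall>Y \<beta> c. is_act_coequalizer C P2 (phi_act C P2 u2) P1 (psi_act C P1 u1)
              (pmap C \<iota> P1 u1 P2 u2) (qmap C \<alpha> P1 u1 P2 u2) Y \<beta> c \<longrightarrow>
            is_reflection C X D \<iota> \<alpha> Y \<beta> (Comp C c (u1 1)))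
       \<and> ((\<exists>Y \<beta> r. is_reflection C X D \<iota> \<alpha> Y \<beta> r) \<longleftrightarrow>
          (\<exists>Y \<beta> c. is_act_coequalizer C P2 (phi_act C P2 u2) P1 (psi_act C P1 u1)
              (pmap C \<iota> P1 u1 P2 u2) (qmap C \<alpha> P1 u1 P2 u2) Y \<beta> c))"
proof -
  interpret T: thm15 C X D \<iota> \<alpha> P1 u1 P2 u2
    using cat dat cop1 cop2 by unfold_locales
  show ?thesis using T.part1 T.part2 by blast
qed

end
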